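(* Let $\mathcal L$ be a choice logic, $V\subseteq\mathcal U$ a finite set of propositional variables, and $s:\mathcal P(V)\to \mathrm{Obt}(\mathcal L)$ any function. Then there is an $\mathcal L$-formula $F$ such that $\deg_{\mathcal L}(\mathcal I,F)=s(\mathcal I)$ for every $\mathcal I\subseteq V$.
   Context: Fix a countably infinite set $\mathcal U$ of propositional variables. Let $\mathbb N=\{1,2,3,\dots\}$ and $\overline{\mathbb N}=\mathbb N\cup\{\infty\}$, with $n<\infty$ for all $n\in\mathbb N$. An interpretation is a set $\mathcal I\subseteq\mathcal U$ (the variables set to true). A choice logic $\mathcal L$ is specified by a finite set $C_{\mathcal L}$ of binary connective symbols disjoint from $\{\neg,\land,\lor\}$ and, for each $\circ\in C_{\mathcal L}$, a function $\mathrm{opt}_\circ:\mathbb N^2\to\mathbb N$ with $\mathrm{opt}_\circ(k,\ell)\le (k+1)(\ell+1)$ for all $k,\ell$, and a function $\deg_\circ:\mathbb N^2\times\overline{\mathbb N}^2\to\overline{\mathbb N}$ such that for all $k,\ell\in\mathbb N$, $m,n\in\overline{\mathbb N}$, either $\deg_\circ(k,\ell,m,n)\le \mathrm{opt}_\circ(k,\ell)$ or $\deg_\circ(k,\ell,m,n)=\infty$. The $\mathcal L$-formulas are built from variables in $\mathcal U$ using unary $\neg$ and binary $\land,\lor$ and the connectives in $C_{\mathcal L}$. The optionality $\mathrm{opt}_{\mathcal L}$ of formulas is defined by: $\mathrm{opt}_{\mathcal L}(a)=1$ for $a\in\mathcal U$; $\mathrm{opt}_{\mathcal L}(\neg F)=1$;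 $\mathrm{opt}_{\mathcal L}(F\land G)=\mathrm{opt}_{\mathcal L}(F\lor G)=\max(\mathrm{opt}_{\mathcal L}(F),\mathrm{opt}_{\mathcal L}(G))$; $\mathrm{opt}_{\mathcal L}(F\circ G)=\mathrm{opt}_\circ(\mathrm{opt}_{\mathcal L}(F),\mathrm{opt}_{\mathcal L}(G))$ for $\circ\in C_{\mathcal L}$. The satisfaction degree $\deg_{\mathcal L}(\mathcal I,F)\in\overline{\mathbb N}$ is defined by: $\deg_{\mathcal L}(\mathcal I,a)=1$ if $a\in\mathcal I$ and $\infty$ otherwise; $\deg_{\mathcal L}(\mathcal I,\neg F)=1$ if $\deg_{\mathcal L}(\mathcal I,F)=\infty$ and $\infty$ otherwise; $\deg_{\mathcal L}(\mathcal I,F\land G)=\max(\deg_{\mathcal L}(\mathcal I,F),\deg_{\mathcal L}(\mathcal I,G))$; $\deg_{\mathcal L}(\mathcal I,F\lor G)=\min(\deg_{\mathcal L}(\mathcal I,F),\deg_{\mathcal L}(\mathcal I,G))$; $\deg_{\mathcal L}(\mathcal I,F\circ G)=\deg_\circ(\mathrm{opt}_{\mathcal L}(F),\mathrm{opt}_{\mathcal L}(G),\deg_{\mathcal L}(\mathcal I,F),\deg_{\mathcal L}(\mathcal I,G))$ for $\circ\in C_{\mathcal L}$. A degree $m\in\overline{\mathbb N}$ is obtainable in $\mathcal L$ if there exist an interpretation $\mathcal I$ and an $\mathcal L$-formula $G$ with $\deg_{\mathcal L}(\mathcal I,G)=m$; $\mathrm{Obt}(\mathcal L)$ denotes the set of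 obtainable degrees. $\mathcal P(V)$ is the power set of $V$. *)

theory Defs
  imports Main "HOL-Library.Extended_Nat"
begin

text \<open>Propositional variables: the countably infinite set U is modelled by nat.
Degrees in N-bar = {1,2,...} \<union> {\<infinity>} are modelled by enat values \<ge> 1.
Connective symbols are elements of a set C of an arbitrary type 'c.\<close>

datatype 'c cformula =
    Atom nat
  | Neg "'c cformula"
  | Conj "'c cformula" "'c cformula"
  | Disj "'c cformula" "'c cformula"
  | Op 'c "'c cformula" "'c cformula"

fun conns :: "'c cformula \<Rightarrow> 'c set" where
  "conns (Atom a) = {}"
| "conns (Neg F) = conns F"
| "conns (Conj F G) = conns F \<union> conns G"
| "conns (Disj F G) = conns F \<union> conns G"
| "conns (Op c F G) = insert c (conns F \<union> conns G)"

definition is_formula :: "'c set \<Rightarrow> 'c cformula \<Rightarrow> bool" where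
  "is_formula C F \<longleftrightarrow> conns F \<subseteq> C"

definition choice_logic ::
  "'c set \<Rightarrow> ('c \<Rightarrow> nat \<Rightarrow> nat \<Rightarrow> nat) \<Rightarrow> ('c \<Rightarrow> nat \<Rightarrow> nat \<Rightarrow> enat \<Rightarrow> enat \<Rightarrow> enat) \<Rightarrow> bool" where
  "choice_logic C opt deg \<longleftrightarrow> finite C
     \<and> (\<forall>c\<in>C. \<forall>k\<ge>1. \<forall>l\<ge>1. 1 \<le> opt c k l \<and> opt c k l \<le> (k + 1) * (l + 1))
     \<and> (\<forall>c\<in>C. \<forall>k\<ge>1. \<forall>l\<ge>1. \<forall>m\<ge>1. \<forall>n\<ge>1.
          1 \<le> deg c k l m n \<and> (deg c k l m n \<le> enat (opt c k l) \<or> deg c k l m n = \<infinity>))"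

fun optL :: "('c \<Rightarrow> nat \<Rightarrow> nat \<Rightarrow> nat) \<Rightarrow> 'c cformula \<Rightarrow> nat" where
  "optL opt (Atom a) = 1"
| "optL opt (Neg F) = 1"
| "optL opt (Conj F G) = max (optL opt F) (optL opt G)"
| "optL opt (Disj F G) = max (optL opt F) (optL opt G)"
| "optL opt (Op c F G) = opt c (optL opt F) (optL opt G)"

fun degL :: "('c \<Rightarrow> nat \<Rightarrow> nat \<Rightarrow> nat) \<Rightarrow> ('c \<Rightarrow> nat \<Rightarrow> nat \<Rightarrow> enat \<Rightarrow> enat \<Rightarrow> enat)
             \<Rightarrow> nat set \<Rightarrow> 'c cformula \<Rightarrow> enat" where
  "degL opt deg I (Atom a) = (if a \<in> I then 1 else \<infinity>)"
| "degL opt deg I (Neg F) = (if degL opt deg I F = \<infinity> then 1 else \<infinity>)"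
| "degL opt deg I (Conj F G) = max (degL opt deg I F) (degL opt deg I G)"
| "degL opt deg I (Disj F G) = min (degL opt deg I F) (degL opt deg I G)"
| "degL opt deg I (Op c F G) =
     deg c (optL opt F) (optL opt G) (degL opt deg I F) (degL opt deg I G)"

definition Obt :: "'c set \<Rightarrow> ('c \<Rightarrow> nat \<Rightarrow> nat \<Rightarrow> nat) \<Rightarrow> ('c \<Rightarrow> nat \<Rightarrow> nat \<Rightarrow> enat \<Rightarrow> enat \<Rightarrow> enat) \<Rightarrow> enat set" where
  "Obt C opt deg = {m. \<exists>I G. is_formula C G \<and> degL opt deg I G = m}"

end

theory Submission
  imports Defs
begin

fun subst :: "nat set \<Rightarrow> 'c cformula \<Rightarrow> 'c cformula" where
  "subst J (Atom a) = (if a \<in> J then Disj (Atom 0) (Neg (Atom 0)) else Conj (Atom 0) (Neg (Atom 0)))"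
| "subst J (Neg F) = Neg (subst J F)"
| "subst J (Conj F G) = Conj (subst J F) (subst J G)"
| "subst J (Disj F G) = Disj (subst J F) (subst J G)"
| "subst J (Op c F G) = Op c (subst J F) (subst J G)"

lemma subst_conns: "conns (subst J F) = conns F"
  by (induction F) auto

lemma subst_opt: "optL opt (subst J F) = optL opt F"
  by (induction F) auto

lemma subst_deg: "degL opt deg I (subst J F) = degL opt deg J F"
  by (induction F) (auto simp: subst_opt)

lemma opt_ge1: "choice_logic C opt deg \<Longrightarrow> conns F \<subseteq> C \<Longrightarrow> 1 \<le> optL opt F"
  by (induction F) (auto simp: choice_logic_def)

lemma deg_ge1: "choice_logic C opt deg \<Longrightarrow> conns F \<subseteq> C \<Longrightarrow> 1 \<le> degL opt deg I F"
proof (induction F)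
  case (Op c F G)
  then show ?case using opt_ge1[OF Op.prems(1), of F] opt_ge1[OF Op.prems(1), of G]
    by (auto simp: choice_logic_def)
qed (auto simp: max_def min_def)

lemma obt_ge1: "choice_logic C opt deg \<Longrightarrow> m \<in> Obt C opt deg \<Longrightarrow> 1 \<le> m"
  unfolding Obt_def is_formula_def using deg_ge1 by blast

lemma main_gen:
  assumes cl: "choice_logic C opt deg" and fin: "finite V"
  shows "(\<forall>I. I \<subseteq> V \<longrightarrow> s I \<in> Obt C opt deg) \<Longrightarrow>
     \<exists>F. is_formula C F \<and> (\<forall>I. degL opt deg I F = s (I \<inter> V))"
  using fin
proof (induction V arbitrary: s rule: finite_induct)
  case empty
  then have "s {} \<in> Obt C opt deg" by auto
  then obtain J G where G: "is_formula C G" "degL opt deg J G = s {}" unfolding Obt_def by auto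
  show ?case
    by (rule exI[of _ "subst J G"]) (use G in \<open>auto simp: is_formula_def subst_conns subst_deg\<close>)
next
  case (insert x V)
  from insert.prems have h1: "\<forall>I. I \<subseteq> V \<longrightarrow> s (insert x I) \<in> Obt C opt deg" by (meson insert_mono)
  from insert.prems have h0: "\<forall>I. I \<subseteq> V \<longrightarrow> s I \<in> Obt C opt deg" by auto
  obtain F1 where F1: "is_formula C F1" "\<forall>I. degL opt deg I F1 = s (insert x (I \<inter> V))"
    using insert.IH[OF h1] by auto
  obtain F0 where F0: "is_formula C F0" "\<forall>I. degL opt deg I F0 = s (I \<inter> V)"
    using insert.IH[OF h0] by auto
  show ?case
  proof (rule exI[of _ "Disj (Conj (Atom x) F1) (Conj (Neg (Atom x)) F0)"], intro conjI allI)
    show "is_formula C (Disj (Conj (Atom x) F1) (Conj (Neg (Atom x)) F0))"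
      using F1 F0 by (auto simp: is_formula_def)
  next
    fix I
    show "degL opt deg I (Disj (Conj (Atom x) F1) (Conj (Neg (Atom x)) F0)) = s (I \<inter> insert x V)"
    proof (cases "x \<in> I")
      case True
      have eq: "I \<inter> insert x V = insert x (I \<inter> V)" using True by auto
      have "1 \<le> s (insert x (I \<inter> V))" using obt_ge1[OF cl] h1 by auto
      then show ?thesis using True F1 eq by (simp add: max_def min_def)
    next
      case False
      have eq: "I \<inter> insert x V = I \<inter> V" using False by auto
      have "1 \<le> s (I \<inter> V)" using obt_ge1[OF cl] h0 by auto
      then show ?thesis using False F0 eq by (simp add: max_def min_def)
    qed
  qed
qed

theorem mainTheorem4:
  fixes C :: "'c set" and opt :: "'c \<Rightarrow> nat \<Rightarrow> nat \<Rightarrow> nat"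
    and deg :: "'c \<Rightarrow> nat \<Rightarrow> nat \<Rightarrow> enat \<Rightarrow> enat \<Rightarrow> enat"
    and V :: "nat set" and s :: "nat set \<Rightarrow> enat"
  assumes "choice_logic C opt deg"
    and "finite V"
    and "\<forall>I. I \<subseteq> V \<longrightarrow> s I \<in> Obt C opt deg"
  shows "\<exists>F. is_formula C F \<and> (\<forall>I. I \<subseteq> V \<longrightarrow> degL opt deg I F = s I)"
proof -
  obtain F where "is_formula C F" "\<forall>I. degL opt deg I F = s (I \<inter> V)"
    using main_gen[OF assms(1,2) assms(3)] by auto
  then show ?thesis by (metis Int_absorb2)
qed

end
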